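(* There are infinitely many pairwise non-isomorphic minimal non-matching tournaments.
   Context: A tournament is a finite, non-null, loopless directed graph in which for any two distinct vertices $u,v$ there is exactly one edge with both ends in $\{u,v\}$. Given an ordering $v_1,\dots,v_n$ of its vertices, a backedge is an edge from $v_j$ to $v_i$ with $j>i$; the ordering is a matching ordering if every vertex is the head or tail of at most one backedge. A matching tournament is a tournament having at least one matching ordering. A tournament $G$ is minimal non-matching if $G$ is not a matching tournament but every subtournament (induced on a nonempty proper subset of vertices) is a matching tournament. *)

theory Defs
  imports Main
begin

text \<open>A tournament on a finite nonempty vertex set V with edge relation E
  (only the restriction of E to V matters): E u v means an edge from u to v.\<close>
definition tournament :: "'a set \<Rightarrow> ('a \<Rightarrow> 'a \<Rightarrow> bool) \<Rightarrow> bool" where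
  "tournament V E \<longleftrightarrow> finite V \<and> V \<noteq> {} \<and> (\<forall>v\<in>V. \<not> E v v) \<and>
     (\<forall>u\<in>V. \<forall>v\<in>V. u \<noteq> v \<longrightarrow> (E u v \<longleftrightarrow> \<not> E v u))"

definition backedge :: "('a \<Rightarrow> 'a \<Rightarrow> bool) \<Rightarrow> 'a list \<Rightarrow> nat \<Rightarrow> nat \<Rightarrow> bool" where
  "backedge E vs j i \<longleftrightarrow> i < j \<and> j < length vs \<and> E (vs ! j) (vs ! i)"

definition matching_ordering :: "'a set \<Rightarrow> ('a \<Rightarrow> 'a \<Rightarrow> bool) \<Rightarrow> 'a list \<Rightarrow> bool" where
  "matching_ordering V E vs \<longleftrightarrow> distinct vs \<and> set vs = V \<and>
     (\<forall>j i l k. backedge E vs j i \<and> backedge E vs l k \<and> {vs ! j, vs ! i} \<inter> {vs ! l, vs ! k} \<noteq> {}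
        \<longrightarrow> (j, i) = (l, k))"

definition matching_tournament :: "'a set \<Rightarrow> ('a \<Rightarrow> 'a \<Rightarrow> bool) \<Rightarrow> bool" where
  "matching_tournament V E \<longleftrightarrow> tournament V E \<and> (\<exists>vs. matching_ordering V E vs)"

text \<open>Subtournament induced on S: same edge relation, restricted to S.\<close>
definition minimal_non_matching :: "'a set \<Rightarrow> ('a \<Rightarrow> 'a \<Rightarrow> bool) \<Rightarrow> bool" where
  "minimal_non_matching V E \<longleftrightarrow> tournament V E \<and> \<not> matching_tournament V E \<and>
     (\<forall>S. S \<subseteq> V \<and> S \<noteq> {} \<and> S \<noteq> V \<longrightarrow> matching_tournament S E)"

definition tournament_iso ::
  "'a set \<Rightarrow> ('a \<Rightarrow> 'a \<Rightarrow> bool) \<Rightarrow> 'b set \<Rightarrow> ('b \<Rightarrow> 'b \<Rightarrow> bool) \<Rightarrow> bool" where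
  "tournament_iso V1 E1 V2 E2 \<longleftrightarrow>
     (\<exists>f. bij_betw f V1 V2 \<and> (\<forall>u\<in>V1. \<forall>v\<in>V1. E1 u v \<longleftrightarrow> E2 (f u) (f v)))"

end

theory Submission
  imports Defs
begin

definition RM :: "'a set \<Rightarrow> ('a \<Rightarrow> 'a \<Rightarrow> bool) \<Rightarrow> ('a \<Rightarrow> nat) \<Rightarrow> bool" where
  "RM S E r \<longleftrightarrow> (\<forall>x\<in>S. \<forall>y\<in>S. \<forall>z\<in>S. \<forall>w\<in>S.
     E x y \<and> r y < r x \<and> E z w \<and> r w < r z \<and> (x = z \<or> x = w \<or> y = z \<or> y = w)
     \<longrightarrow> x = z \<and> y = w)"

lemma RM_mono: "RM S E r \<Longrightarrow> T \<subseteq> S \<Longrightarrow> RM T E r"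
  unfolding RM_def by blast

lemma RM_D: "RM S E r \<Longrightarrow> x \<in> S \<Longrightarrow> y \<in> S \<Longrightarrow> z \<in> S \<Longrightarrow> w \<in> S \<Longrightarrow>
  E x y \<Longrightarrow> r y < r x \<Longrightarrow> E z w \<Longrightarrow> r w < r z \<Longrightarrow> (x = z \<or> x = w \<or> y = z \<or> y = w) \<Longrightarrow> x = z \<and> y = w"
  unfolding RM_def by blast

lemma rank_ordering:
  fixes S :: "nat set"
  assumes fin: "finite S" and inj: "inj_on r S" and rm: "RM S E r"
  shows "\<exists>vs. matching_ordering S E vs"
proof -
  define vs where "vs = sort_key r (sorted_list_of_set S)"
  have d: "distinct vs" using fin by (simp add: vs_def)
  have s: "set vs = S" using fin by (simp add: vs_def)
  have so: "sorted (map r vs)" by (simp add: vs_def)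
  have mono: "r (vs ! i) < r (vs ! j)" if "i < j" "j < length vs" for i j
  proof -
    have "r (vs ! i) \<le> r (vs ! j)"
      using sorted_nth_mono[OF so, of i j] that by simp
    moreover have "vs ! i \<noteq> vs ! j" using d that nth_eq_iff_index_eq by fastforce
    moreover have "vs ! i \<in> S" "vs ! j \<in> S" using s that by auto
    ultimately show ?thesis using inj unfolding inj_on_def by force
  qed
  have "matching_ordering S E vs"
    unfolding matching_ordering_def
  proof (intro conjI allI impI)
    show "distinct vs" "set vs = S" by fact+
    fix j i l k
    assume a: "backedge E vs j i \<and> backedge E vs l k \<and> {vs ! j, vs ! i} \<inter> {vs ! l, vs ! k} \<noteq> {}"
    hence b1: "i < j" "j < length vs" "E (vs ! j) (vs ! i)"
      and b2: "k < l" "l < length vs" "E (vs ! l) (vs ! k)"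
      and sh: "{vs ! j, vs ! i} \<inter> {vs ! l, vs ! k} \<noteq> {}"
      by (auto simp: backedge_def)
    have mem: "vs ! j \<in> S" "vs ! i \<in> S" "vs ! l \<in> S" "vs ! k \<in> S"
      using b1 b2 s by auto
    have sh': "vs ! j = vs ! l \<or> vs ! j = vs ! k \<or> vs ! i = vs ! l \<or> vs ! i = vs ! k"
      using sh by auto
    have "vs ! j = vs ! l \<and> vs ! i = vs ! k"
      using RM_D[OF rm mem b1(3) mono[OF b1(1,2)] b2(3) mono[OF b2(1,2)] sh'] .
    moreover have "i < length vs" "k < length vs" using b1 b2 by auto
    ultimately show "(j, i) = (l, k)"
      using d b1(2) b2(2) nth_eq_iff_index_eq by auto
  qed
  thus ?thesis by blast
qed

lemma ordering_rank:
  assumes mo: "matching_ordering V E vs"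
  obtains pos where "bij_betw pos V {..<card V}" "RM V E pos"
proof -
  have d: "distinct vs" and s: "set vs = V" using mo by (auto simp: matching_ordering_def)
  have len: "length vs = card V" using d s distinct_card by fastforce
  have bij: "bij_betw ((!) vs) {..<length vs} V" using d s bij_betw_nth by blast
  define pos where "pos = inv_into {..<length vs} ((!) vs)"
  have bp: "bij_betw pos V {..<length vs}" unfolding pos_def using bij bij_betw_inv_into by blast
  have np: "vs ! pos x = x" if "x \<in> V" for x
    unfolding pos_def using bij that by (simp add: bij_betw_def f_inv_into_f)
  have pl: "pos x < length vs" if "x \<in> V" for x using bp that bij_betw_apply by fastforce
  have "RM V E pos" unfolding RM_def
  proof (intro ballI impI)
    fix x y z w assume m: "x \<in> V" "y \<in> V" "z \<in> V" "w \<in> V"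
      and h: "E x y \<and> pos y < pos x \<and> E z w \<and> pos w < pos z \<and> (x = z \<or> x = w \<or> y = z \<or> y = w)"
    have "backedge E vs (pos x) (pos y)" using h m np pl by (simp add: backedge_def)
    moreover have "backedge E vs (pos z) (pos w)" using h m np pl by (simp add: backedge_def)
    moreover have "{vs ! pos x, vs ! pos y} \<inter> {vs ! pos z, vs ! pos w} \<noteq> {}"
      using h m np by auto
    ultimately have "(pos x, pos y) = (pos z, pos w)"
      using mo unfolding matching_ordering_def by blast
    thus "x = z \<and> y = w" using np m by (metis prod.inject)
  qed
  thus ?thesis using that bp len by simp
qed

definition pe :: "nat \<Rightarrow> nat \<Rightarrow> nat \<Rightarrow> bool" where
  "pe n p q \<longleftrightarrow> (q = Suc p \<and> p \<noteq> 1 \<and> p \<noteq> 2 \<and> p + 4 \<noteq> n \<and> p + 3 \<noteq> n)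
     \<or> (p = 1 \<and> q = 3) \<or> (p + 4 = n \<and> q + 2 = n)"

definition TE :: "nat \<Rightarrow> nat \<Rightarrow> nat \<Rightarrow> bool" where
  "TE n u v \<longleftrightarrow> (u < v \<and> \<not> pe n u v) \<or> (v < u \<and> pe n v u)"

definition InS :: "nat \<Rightarrow> nat \<Rightarrow> nat set" where
  "InS n v = {u. u < n \<and> TE n u v}"

definition dg :: "nat \<Rightarrow> nat \<Rightarrow> nat" where
  "dg n v = (if v \<le> 1 then 1 else if n \<le> v + 2 then n - 2 else v)"

lemma card_In:
  assumes n: "9 \<le> n" and v: "v < n"
  shows "card (InS n v) = dg n v"
proof -
  consider "v = 0" | "v = 1" | "v = 2" | "v = 3" | "4 \<le> v" "v + 5 \<le> n" | "v + 4 = n"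
    | "v + 3 = n" | "v + 2 = n" | "v + 1 = n" using n v by linarith
  thus ?thesis
  proof cases
    case 1
    hence "InS n v = {1}" using n by (auto simp: InS_def TE_def pe_def)
    thus ?thesis using 1 by (simp add: dg_def)
  next
    case 2
    hence "InS n v = {3}" using n by (auto simp: InS_def TE_def pe_def)
    thus ?thesis using 2 by (simp add: dg_def)
  next
    case 3
    hence "InS n v = {0,1}" using n by (auto simp: InS_def TE_def pe_def)
    thus ?thesis using 3 n by (simp add: dg_def)
  next
    case 4
    hence "InS n v = {0,2,4}" using n by (auto simp: InS_def TE_def pe_def)
    thus ?thesis using 4 n by (simp add: dg_def)
  next
    case 5
    hence "InS n v = ({..<v} - {v - 1}) \<union> {v + 1}" using n by (auto simp: InS_def TE_def pe_def)
    thus ?thesis using 5 n by (simp add: dg_def)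
  next
    case 6
    hence "InS n v = ({..<v} - {v - 1}) \<union> {n - 2}" using n by (auto simp: InS_def TE_def pe_def)
    thus ?thesis using 6 n by (simp add: dg_def)
  next
    case 7
    hence "InS n v = {..<v}" using n by (auto simp: InS_def TE_def pe_def)
    thus ?thesis using 7 n by (simp add: dg_def)
  next
    case 8
    hence "InS n v = ({..<v} - {v - 2}) \<union> {v + 1}" using n by (auto simp: InS_def TE_def pe_def)
    thus ?thesis using 8 n by (simp add: dg_def)
  next
    case 9
    hence "InS n v = {..<v} - {v - 1}" using n by (auto simp: InS_def TE_def pe_def)
    thus ?thesis using 9 n by (simp add: dg_def)
  qed
qed

locale posctx =
  fixes V :: "'a set" and E :: "'a \<Rightarrow> 'a \<Rightarrow> bool" and pos :: "'a \<Rightarrow> nat" and N :: nat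
  assumes fin: "finite V"
    and irr: "\<And>v. v \<in> V \<Longrightarrow> \<not> E v v"
    and tot: "\<And>u v. u \<in> V \<Longrightarrow> v \<in> V \<Longrightarrow> u \<noteq> v \<Longrightarrow> E u v \<longleftrightarrow> \<not> E v u"
    and bij: "bij_betw pos V {..<N}"
    and rm: "RM V E pos"
begin

definition In where "In v = {u\<in>V. E u v}"

lemma inj: "inj_on pos V" using bij by (simp add: bij_betw_def)

lemma pos_lt: "v \<in> V \<Longrightarrow> pos v < N" using bij bij_betw_apply by fastforce

lemma pos_eq: "u \<in> V \<Longrightarrow> v \<in> V \<Longrightarrow> pos u = pos v \<Longrightarrow> u = v"
  using inj_onD[OF inj] by metis

lemma occ: "p < N \<Longrightarrow> \<exists>w\<in>V. pos w = p"
proof -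
  assume "p < N"
  hence "p \<in> pos ` V" using bij by (simp add: bij_betw_def)
  thus ?thesis by blast
qed

lemma card_earlier: assumes "p \<le> N" shows "card {u\<in>V. pos u < p} = p"
proof -
  have "pos ` {u\<in>V. pos u < p} = {..<p}"
  proof
    show "pos ` {u\<in>V. pos u < p} \<subseteq> {..<p}" by auto
    show "{..<p} \<subseteq> pos ` {u\<in>V. pos u < p}"
    proof
      fix q assume "q \<in> {..<p}"
      hence "q < N" using assms by simp
      then obtain w where "w \<in> V" "pos w = q" using occ by blast
      thus "q \<in> pos ` {u\<in>V. pos u < p}" using \<open>q \<in> {..<p}\<close> by force
    qed
  qed
  moreover have "inj_on pos {u\<in>V. pos u < p}" using inj by (rule inj_on_subset) auto
  ultimately have "card {u\<in>V. pos u < p} = card {..<p::nat}" using card_image by fastforce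
  thus ?thesis by simp
qed

lemma later_le1:
  assumes "v \<in> V"
  shows "card {u\<in>In v. pos v < pos u} \<le> 1"
proof -
  have fA: "finite {u\<in>In v. pos v < pos u}" using fin by (simp add: In_def)
  have all: "\<forall>a\<in>{u\<in>In v. pos v < pos u}. \<forall>b\<in>{u\<in>In v. pos v < pos u}. a = b"
  proof (intro ballI)
    fix a b assume "a \<in> {u\<in>In v. pos v < pos u}" "b \<in> {u\<in>In v. pos v < pos u}"
    hence "a \<in> V" "b \<in> V" "E a v" "E b v" "pos v < pos a" "pos v < pos b" by (auto simp: In_def)
    thus "a = b" using RM_D[OF rm \<open>a \<in> V\<close> assms \<open>b \<in> V\<close> assms] by simp
  qed
  show ?thesis using card_le_Suc0_iff_eq[OF fA] all by simp
qed

lemma K6: assumes v: "v \<in> V" shows "card (In v) \<le> pos v + 1"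
proof -
  have "In v \<subseteq> {u\<in>V. pos u < pos v} \<union> {u\<in>In v. pos v < pos u}"
  proof
    fix u assume u: "u \<in> In v"
    hence "u \<in> V" "u \<noteq> v" using irr v by (auto simp: In_def)
    hence "pos u \<noteq> pos v" using pos_eq v by metis
    thus "u \<in> {u\<in>V. pos u < pos v} \<union> {u\<in>In v. pos v < pos u}" using u \<open>u \<in> V\<close> by auto
  qed
  hence "card (In v) \<le> card ({u\<in>V. pos u < pos v} \<union> {u\<in>In v. pos v < pos u})"
    using fin by (intro card_mono) (auto simp: In_def)
  also have "\<dots> \<le> card {u\<in>V. pos u < pos v} + card {u\<in>In v. pos v < pos u}"
    by (rule card_Un_le)
  finally have "card (In v) \<le> card {u\<in>V. pos u < pos v} + card {u\<in>In v. pos v < pos u}" .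
  thus ?thesis using card_earlier[of "pos v"] pos_lt[OF v] later_le1[OF v] by simp
qed

lemma K5: assumes v: "v \<in> V" and "\<forall>u\<in>In v. pos u < pos v" shows "card (In v) \<le> pos v"
proof -
  have "In v \<subseteq> {u\<in>V. pos u < pos v}" using assms by (auto simp: In_def)
  hence "card (In v) \<le> card {u\<in>V. pos u < pos v}" using fin by (simp add: card_mono)
  thus ?thesis using card_earlier[of "pos v"] pos_lt[OF v] by simp
qed

lemma K4: assumes v: "v \<in> V" shows "pos v \<le> card (In v) + 1"
proof -
  let ?D = "{u\<in>V. pos u < pos v \<and> E v u}"
  have "{u\<in>V. pos u < pos v} \<subseteq> In v \<union> ?D"
  proof
    fix u assume u: "u \<in> {u\<in>V. pos u < pos v}"
    hence "u \<in> V" "u \<noteq> v" by auto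
    hence "E u v \<or> E v u" using tot[OF _ v] by metis
    thus "u \<in> In v \<union> ?D" using u by (auto simp: In_def)
  qed
  hence "card {u\<in>V. pos u < pos v} \<le> card (In v \<union> ?D)" using fin by (simp add: card_mono In_def)
  also have "\<dots> \<le> card (In v) + card ?D" by (rule card_Un_le)
  also have "card ?D \<le> 1"
  proof -
    have fD: "finite ?D" using fin by simp
    have all: "\<forall>a\<in>?D. \<forall>b\<in>?D. a = b"
    proof (intro ballI)
      fix a b assume "a \<in> ?D" "b \<in> ?D"
      hence "a \<in> V" "b \<in> V" "E v a" "E v b" "pos a < pos v" "pos b < pos v" by auto
      thus "a = b" using RM_D[OF rm v \<open>a \<in> V\<close> v \<open>b \<in> V\<close>] by simp
    qed
    show ?thesis using card_le_Suc0_iff_eq[OF fD] all by simp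
  qed
  finally show ?thesis using card_earlier[of "pos v"] pos_lt[OF v] by simp
qed

lemma K2a: assumes v: "v \<in> V" and z: "z \<in> V" and e: "E v z" and p: "pos z < pos v"
  shows "\<forall>u\<in>In v. pos u < pos v"
proof
  fix u assume u: "u \<in> In v"
  hence uV: "u \<in> V" and euv: "E u v" by (auto simp: In_def)
  have "u \<noteq> v" using irr euv v by metis
  show "pos u < pos v"
  proof (rule ccontr)
    assume "\<not> pos u < pos v"
    hence "pos v < pos u" using \<open>u \<noteq> v\<close> pos_eq uV v by (metis linorder_neqE_nat)
    hence "u = v \<and> v = z" using RM_D[OF rm uV v v z euv _ e p] by metis
    thus False using \<open>u \<noteq> v\<close> by metis
  qed
qed

lemma K2b: assumes v: "v \<in> V" and z: "z \<in> V" and e: "E v z" and p: "pos z < pos v"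
  shows "card (In v) + 1 \<le> pos v"
proof -
  have a: "\<forall>u\<in>In v. pos u < pos v" by (rule K2a[OF assms])
  have vz: "v \<noteq> z" using irr[OF v] e by auto
  have "\<not> E z v" using tot[OF v z vz] e by simp
  hence zn: "z \<notin> In v" by (simp add: In_def)
  have fI: "finite (In v)" using fin by (simp add: In_def)
  have "insert z (In v) \<subseteq> {u\<in>V. pos u < pos v}" using a z p by (auto simp: In_def)
  hence "card (insert z (In v)) \<le> card {u\<in>V. pos u < pos v}" using fin by (simp add: card_mono)
  moreover have "card (insert z (In v)) = card (In v) + 1" using zn fI by simp
  ultimately show ?thesis using card_earlier[of "pos v"] pos_lt[OF v] by simp
qed

lemma later_in: assumes v: "v \<in> V" and c: "pos v < card (In v)"
  obtains u where "u \<in> V" "E u v" "pos v < pos u"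
proof -
  have "\<not> (\<forall>u\<in>In v. pos u < pos v)" using K5[OF v] c by linarith
  then obtain u where "u \<in> In v" "\<not> pos u < pos v" by metis
  moreover have "u \<in> V" "u \<noteq> v" using irr v \<open>u \<in> In v\<close> by (auto simp: In_def)
  moreover hence "pos u \<noteq> pos v" using pos_eq v by metis
  ultimately show ?thesis using that by (auto simp: In_def)
qed

end

lemma TE_irr: "\<not> TE n v v" by (simp add: TE_def)

lemma TE_tot: "u \<noteq> v \<Longrightarrow> TE n u v \<longleftrightarrow> \<not> TE n v u"
  by (cases "u < v") (auto simp: TE_def)

locale nmctx =
  fixes n m :: nat and pos :: "nat \<Rightarrow> nat"
  assumes nm: "n = 2 * m + 9"
    and bij0: "bij_betw pos {..<n} {..<n}"
    and rm0: "RM {..<n} (TE n) pos"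
begin

sublocale P: posctx "{..<n}" "TE n" pos n
proof
  show "finite {..<n}" by simp
  show "\<And>v. v \<in> {..<n} \<Longrightarrow> \<not> TE n v v" by (simp add: TE_irr)
  show "\<And>u v. u \<in> {..<n} \<Longrightarrow> v \<in> {..<n} \<Longrightarrow> u \<noteq> v \<Longrightarrow> TE n u v \<longleftrightarrow> \<not> TE n v u"
    by (rule TE_tot)
  show "bij_betw pos {..<n} {..<n}" by (rule bij0)
  show "RM {..<n} (TE n) pos" by (rule rm0)
qed

lemma In_eq: "P.In v = InS n v" by (simp add: P.In_def InS_def)

lemma cardIn: "v < n \<Longrightarrow> card (P.In v) = dg n v"
proof -
  have "9 \<le> n" using nm by simp
  moreover assume "v < n"
  ultimately show ?thesis using card_In[of n v] In_eq[of v] by simp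
qed

lemma up: "v < n \<Longrightarrow> dg n v \<le> pos v + 1"
  using P.K6[of v] cardIn[of v] by simp

lemma lo: "v < n \<Longrightarrow> pos v \<le> dg n v + 1"
  using P.K4[of v] cardIn[of v] by simp

lemma posn: "v < n \<Longrightarrow> pos v < n" using P.pos_lt by simp

lemma peq: "u < n \<Longrightarrow> v < n \<Longrightarrow> pos u = pos v \<Longrightarrow> u = v" using P.pos_eq by simp

lemma occ: "p < n \<Longrightarrow> \<exists>w<n. pos w = p" using P.occ[of p] by auto

lemma later: assumes "v < n" "pos v < dg n v"
  obtains y where "y < n" "TE n y v" "pos v < pos y"
  using P.later_in[of v] assms cardIn[of v] by auto

lemma K2b: "v < n \<Longrightarrow> z < n \<Longrightarrow> TE n v z \<Longrightarrow> pos z < pos v \<Longrightarrow> dg n v + 1 \<le> pos v"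
  using P.K2b[of v z] cardIn[of v] by simp

lemma K2a: assumes "v < n" "z < n" "TE n v z" "pos z < pos v" "u < n" "TE n u v" shows "pos u < pos v"
proof -
  have "u \<in> P.In v" using assms by (simp add: P.In_def)
  moreover have "\<forall>u\<in>P.In v. pos u < pos v" using P.K2a[of v z] assms by simp
  ultimately show ?thesis by (rule bspec[rotated])
qed

lemma RMD: assumes "x < n" "y < n" "z < n" "w < n" "TE n x y" "pos y < pos x"
   "TE n z w" "pos w < pos z" "x = z \<or> x = w \<or> y = z \<or> y = w" shows "x = z \<and> y = w"
  by (rule RM_D[OF rm0]) (use assms in simp_all)

lemma dg_small: "v < n \<Longrightarrow> 2 \<le> v \<Longrightarrow> v + 2 < n \<Longrightarrow> dg n v = v" by (simp add: dg_def)
lemma dg_ge2: "v < n \<Longrightarrow> 2 \<le> v \<Longrightarrow> 2 \<le> dg n v" using nm by (simp add: dg_def)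
lemma dg_le1: "v < n \<Longrightarrow> dg n v \<le> 1 \<Longrightarrow> v \<le> 1" using nm by (simp add: dg_def split: if_splits)
lemma dg_low: "v < n \<Longrightarrow> v + 2 < n \<Longrightarrow> dg n v \<le> max 1 v" by (simp add: dg_def)
lemma dg_big: "v < n \<Longrightarrow> n \<le> v + 2 \<Longrightarrow> dg n v = n - 2" using nm by (simp add: dg_def)

definition I :: "nat \<Rightarrow> bool" where
  "I v \<longleftrightarrow> pos (v - 1) \<le> v - 1 \<and> pos v = v + 1 \<and> (\<exists>z. z < v \<and> TE n v z \<and> pos z < pos v)"

lemma occupant:
  assumes v3: "3 \<le> v" and vn: "v + 4 \<le> n" and Iv: "I v"
  shows "pos (v + 1) = v"
proof -
  have "v < n" using vn by simp
  then obtain w where w: "w < n" "pos w = v" using occ[of v] by auto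
  have a: "dg n w \<le> v + 1" using up[OF w(1)] w by simp
  have b: "v \<le> dg n w + 1" using lo[OF w(1)] w by simp
  have "2 \<le> w"
  proof (rule ccontr)
    assume "\<not> 2 \<le> w" hence "dg n w = 1" by (simp add: dg_def)
    thus False using b v3 by simp
  qed
  have "w + 2 < n"
  proof (rule ccontr)
    assume "\<not> w + 2 < n" hence "dg n w = n - 2" using dg_big w by simp
    thus False using a vn by simp
  qed
  hence dw: "dg n w = w" using dg_small \<open>2 \<le> w\<close> w by simp
  have "w \<noteq> v - 1" using Iv w v3 by (auto simp: I_def)
  moreover have "w \<noteq> v" using Iv w by (auto simp: I_def)
  ultimately have "w = v + 1" using a b dw by simp
  thus ?thesis using w by simp
qed


lemma TE0: "u < n \<Longrightarrow> TE n u 0 \<Longrightarrow> u = 1" using nm by (auto simp: TE_def pe_def)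
lemma TE1: "u < n \<Longrightarrow> TE n u 1 \<Longrightarrow> u = 3" using nm by (auto simp: TE_def pe_def)
lemma TE2: "u < n \<Longrightarrow> TE n u 2 \<Longrightarrow> u = 0 \<or> u = 1" using nm by (auto simp: TE_def pe_def)
lemma TE10: "TE n 1 0" using nm by (auto simp: TE_def pe_def)
lemma TE31: "TE n 3 1" using nm by (auto simp: TE_def pe_def)
lemma TE23: "TE n 2 3" using nm by (auto simp: TE_def pe_def)
lemma TE43: "TE n 4 3" using nm by (auto simp: TE_def pe_def)
lemma TEmid: "4 \<le> a \<Longrightarrow> a + 5 \<le> n \<Longrightarrow> TE n y a \<Longrightarrow> (y < a \<and> y \<noteq> a - 1) \<or> y = a + 1"
  using nm by (auto simp: TE_def pe_def)
lemma TEsucc: "3 \<le> a \<Longrightarrow> a + 5 \<le> n \<Longrightarrow> TE n (a + 1) a"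
  using nm by (auto simp: TE_def pe_def)
lemma TEoff: "a + 3 = n \<Longrightarrow> y < n \<Longrightarrow> TE n y a \<Longrightarrow> y < a"
  using nm by (auto simp: TE_def pe_def)

lemma base: "I 3"
proof -
  obtain x0 where x0: "x0 < n" "pos x0 = 0" using occ[of 0] nm by auto
  have "dg n x0 \<le> 1" using up[OF x0(1)] x0 by simp
  hence x01: "x0 \<le> 1" using dg_le1 x0 by simp
  have "pos x0 < dg n x0" using x0 x01 by (simp add: dg_def)
  then obtain u where u: "u < n" "TE n u x0" "pos x0 < pos u" using later x0 by blast
  show ?thesis
  proof (cases "x0 = 0")
    case True
    hence u1: "u = 1" using TE0 u by simp
    have p1: "2 \<le> pos 1" using K2b[of 1 0] TE10 u u1 True x0 nm by (simp add: dg_def)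
    obtain w where w: "w < n" "pos w = 1" using occ[of 1] nm by auto
    have "dg n w \<le> 2" using up[OF w(1)] w by simp
    hence "w \<le> 2" using w nm by (simp add: dg_def split: if_splits)
    moreover have "w \<noteq> 0" using w x0 True by (cases "w = 0") auto
    moreover have "w \<noteq> 1" using w p1 by auto
    ultimately have w2: "w = 2" by simp
    have h2: "pos 2 < dg n 2" using w w2 nm by (simp add: dg_def)
    have two: "2 < n" using nm by simp
    obtain y where y: "y < n" "TE n y 2" "pos 2 < pos y" by (rule later[OF two h2])
    have "y = 0 \<or> y = 1" using TE2 y by simp
    moreover have "y \<noteq> 0" using y w w2 x0 True by (cases "y = 0") auto
    ultimately have "y = 1" by simp
    hence "1 = (1::nat) \<and> (0::nat) = 2"
      using RMD[of 1 0 1 2] TE10 y u u1 True x0 nm by simp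
    thus ?thesis by simp
  next
    case False
    hence x1: "x0 = 1" using x01 by simp
    hence u3: "u = 3" using TE1 u by simp
    have n9: "9 \<le> n" using nm by simp
    have a: "4 \<le> pos 3" using K2b[of 3 1] TE31 u u3 x1 x0 n9 by (simp add: dg_def)
    have b: "pos 3 \<le> 4" using lo[of 3] n9 by (simp add: dg_def)
    have p3: "pos 3 = 4" using a b by simp
    have c2: "pos 2 < 4" using K2a[of 3 1 2] TE31 TE23 u u3 x1 x0 n9 p3 by simp
    have c4: "pos 4 < 4" using K2a[of 3 1 4] TE31 TE43 u u3 x1 x0 n9 p3 by simp
    have d4: "3 \<le> pos 4" using up[of 4] n9 by (simp add: dg_def)
    have "pos 2 \<noteq> 3"
    proof
      assume "pos 2 = 3"
      hence "pos 4 = pos 2" using c4 d4 by simp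
      hence "(4::nat) = 2" using peq[of 4 2] n9 by simp
      thus False by simp
    qed
    hence "pos 2 \<le> 2" using c2 by simp
    moreover have "\<exists>z. z < 3 \<and> TE n 3 z \<and> pos z < pos 3" using TE31 x0 x1 p3 by (intro exI[of _ 1]) simp
    ultimately show ?thesis using p3 by (simp add: I_def)
  qed
qed

lemma step:
  assumes v3: "3 \<le> v" and vn: "v + 6 \<le> n" and Iv: "I v"
  shows "I (v + 2)"
proof -
  have pv1: "pos (v + 1) = v" using occupant[OF v3 _ Iv] vn by simp
  have dv1: "dg n (v + 1) = v + 1" using v3 vn by (simp add: dg_def)
  obtain y where y: "y < n" "TE n y (v + 1)" "v < pos y"
    using later[of "v + 1"] pv1 dv1 vn by auto
  have "(y < v + 1 \<and> y \<noteq> v) \<or> y = v + 2" using TEmid[of "v + 1" y] v3 vn y by simp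
  moreover have "\<not> (y < v + 1 \<and> y \<noteq> v)"
  proof
    assume h: "y < v + 1 \<and> y \<noteq> v"
    show False
    proof (cases "y = v - 1")
      case True thus False using Iv y v3 by (auto simp: I_def)
    next
      case False
      hence yl: "y \<le> v - 2" using h v3 by arith
      hence "y + 2 < n" using vn v3 by simp
      hence "dg n y \<le> max 1 y" using dg_low[of y] y by simp
      hence "dg n y \<le> v - 2" using yl v3 by simp
      thus False using lo[of y] y v3 by simp
    qed
  qed
  ultimately have y2: "y = v + 2" by blast
  have e: "TE n (v + 2) (v + 1)" using y y2 by simp
  have dv2: "dg n (v + 2) = v + 2" using v3 vn by (simp add: dg_def)
  have a: "v + 3 \<le> pos (v + 2)" using K2b[of "v + 2" "v + 1"] e pv1 y y2 vn dv2 by simp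
  have b: "pos (v + 2) \<le> v + 3" using lo[of "v + 2"] vn dv2 by simp
  have "\<exists>z. z < v + 2 \<and> TE n (v + 2) z \<and> pos z < pos (v + 2)"
    using e pv1 y y2 by (intro exI[of _ "v + 1"]) simp
  thus ?thesis using a b pv1 by (simp add: I_def)
qed

lemma final:
  assumes v3: "3 \<le> v" and vn: "v + 4 = n" and Iv: "I v"
  shows False
proof -
  have pv1: "pos (v + 1) = v" using occupant[OF v3 _ Iv] vn by simp
  have dv1: "dg n (v + 1) = v + 1" using v3 vn by (simp add: dg_def)
  obtain y where y: "y < n" "TE n y (v + 1)" "v < pos y"
    using later[of "v + 1"] pv1 dv1 vn by auto
  have "y < v + 1" using TEoff[of "v + 1" y] vn y by simp
  moreover have "y \<noteq> v - 1" using Iv y v3 by (auto simp: I_def)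
  moreover have "\<not> y \<le> v - 2"
  proof
    assume yl: "y \<le> v - 2"
    hence "y + 2 < n" using vn v3 by simp
    hence "dg n y \<le> max 1 y" using dg_low[of y] y by simp
    hence "dg n y \<le> v - 2" using yl v3 by simp
    thus False using lo[of y] y v3 by simp
  qed
  ultimately have yv: "y = v" by simp
  obtain z where z: "z < v" "TE n v z" "pos z < pos v" using Iv by (auto simp: I_def)
  have "v = v \<and> v + 1 = z"
    using RMD[of v "v + 1" v z] y yv pv1 z vn by simp
  thus False using z by simp
qed

lemma chain: "j \<le> m + 1 \<Longrightarrow> I (2 * j + 3)"
proof (induction j)
  case 0 thus ?case using base by simp
next
  case (Suc j)
  hence "I (2 * j + 3)" by simp
  moreover have "2 * j + 3 + 6 \<le> n" using Suc nm by simp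
  ultimately have "I (2 * j + 3 + 2)" using step[of "2 * j + 3"] by simp
  thus ?case by (simp add: algebra_simps)
qed

lemma contra: False
  using final[of "2 * (m + 1) + 3"] chain[of "m + 1"] nm by simp

end

lemma not_matching:
  assumes nm: "n = 2 * m + 9"
  shows "\<not> matching_tournament {..<n} (TE n)"
proof
  assume "matching_tournament {..<n} (TE n)"
  then obtain vs where "matching_ordering {..<n} (TE n) vs" by (auto simp: matching_tournament_def)
  then obtain pos where "bij_betw pos {..<n} {..<card {..<n}}" "RM {..<n} (TE n) pos"
    by (rule ordering_rank)
  hence "nmctx n m pos" using nm by (unfold_locales) simp_all
  thus False using nmctx.contra by blast
qed

lemma pe_inj1: "9 \<le> n \<Longrightarrow> pe n a c \<Longrightarrow> pe n b c \<Longrightarrow> a = b"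
  by (auto simp: pe_def)
lemma pe_inj2: "9 \<le> n \<Longrightarrow> pe n a b \<Longrightarrow> pe n a c \<Longrightarrow> b = c"
  by (auto simp: pe_def)
lemma pe_lt: "pe n a b \<Longrightarrow> a < b"
  by (auto simp: pe_def)

lemma inv_order:
  fixes S :: "nat set" and m :: "nat \<Rightarrow> nat"
  assumes M1: "\<And>u. u \<in> S \<Longrightarrow> m u \<in> S \<and> m (m u) = u"
    and M2: "\<And>u w. u \<in> S \<Longrightarrow> w \<in> S \<Longrightarrow> \<not> (u < w \<and> w < m u) \<and> \<not> (m u < w \<and> w < u)"
    and x: "x \<in> S" and y: "y \<in> S" and xy: "x < y" and nm: "m x \<noteq> y"
  shows "m x < m y"
proof -
  have mx: "m x \<in> S" "m (m x) = x" using M1 x by auto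
  have my: "m y \<in> S" "m (m y) = y" using M1 y by auto
  have ne: "m x \<noteq> m y" using mx my xy by (metis less_irrefl)
  show ?thesis
  proof (rule ccontr)
    assume "\<not> m x < m y"
    hence lt: "m y < m x" using ne by simp
    show False
    proof (cases "x < m x")
      case True
      have "\<not> (x < y \<and> y < m x)" using M2[OF x y] by simp
      hence "m x < y" using xy nm by (metis linorder_neqE_nat)
      hence "m y < m x \<and> m x < y" using lt by simp
      moreover have "\<not> (m y < m x \<and> m x < y)" using M2[OF y mx(1)] by simp
      ultimately show False by simp
    next
      case False
      hence "m x \<le> x" by simp
      hence "m y < x" using lt by simp
      moreover have "\<not> (m y < x \<and> x < y)" using M2[OF y x] by simp
      ultimately show False using xy by simp
    qed
  qed
qed

lemma inv_RM:
  fixes S :: "nat set" and m :: "nat \<Rightarrow> nat"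
  assumes n9: "9 \<le> n"
    and M1: "\<And>u. u \<in> S \<Longrightarrow> m u \<in> S \<and> m (m u) = u"
    and M2: "\<And>u w. u \<in> S \<Longrightarrow> w \<in> S \<Longrightarrow> \<not> (u < w \<and> w < m u) \<and> \<not> (m u < w \<and> w < u)"
    and M3: "\<And>u. u \<in> S \<Longrightarrow> u < m u \<Longrightarrow> pe n u (m u)"
    and B: "\<And>a b c. a \<in> S \<Longrightarrow> b \<in> S \<Longrightarrow> c \<in> S \<Longrightarrow> pe n a b \<Longrightarrow> pe n b c \<Longrightarrow> m a = b \<or> m b = c"
  shows "RM S (TE n) (\<lambda>u. 2 * m u)" and "inj_on (\<lambda>u. 2 * m u) S"
proof -
  have bk: "y < x \<and> pe n y x \<and> m y \<noteq> x"
    if xS: "x \<in> S" and yS: "y \<in> S" and e: "TE n x y" and r: "m y < m x" for x y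
  proof -
    have "\<not> x < y"
    proof
      assume xy: "x < y"
      hence "\<not> pe n x y" using e by (auto simp: TE_def)
      hence "m x \<noteq> y"
      proof (cases "x < m x")
        case True thus ?thesis using M3[OF xS] \<open>\<not> pe n x y\<close> by auto
      next
        case False thus ?thesis using xy by auto
      qed
      hence "m x < m y" using inv_order[OF M1 M2 xS yS xy] by blast
      thus False using r by simp
    qed
    moreover have "x \<noteq> y" using r by auto
    ultimately have yx: "y < x" by simp
    hence pe: "pe n y x" using e by (auto simp: TE_def)
    have "m y \<noteq> x"
    proof
      assume "m y = x"
      hence "m x = y" using M1[OF yS] by auto
      thus False using r \<open>m y = x\<close> yx by simp
    qed
    thus ?thesis using yx pe by simp
  qed
  show "RM S (TE n) (\<lambda>u. 2 * m u)"
    unfolding RM_def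
  proof (intro ballI impI)
    fix x y z w assume S: "x \<in> S" "y \<in> S" "z \<in> S" "w \<in> S"
      and h: "TE n x y \<and> 2 * m y < 2 * m x \<and> TE n z w \<and> 2 * m w < 2 * m z \<and> (x = z \<or> x = w \<or> y = z \<or> y = w)"
    have b1: "y < x" "pe n y x" "m y \<noteq> x" using bk[of x y] S h by auto
    have b2: "w < z" "pe n w z" "m w \<noteq> z" using bk[of z w] S h by auto
    consider "x = z" | "y = w" | "x = w" | "y = z" using h by blast
    thus "x = z \<and> y = w"
    proof cases
      case 1 thus ?thesis using pe_inj1[OF n9 b1(2)] b2(2) by simp
    next
      case 2 thus ?thesis using pe_inj2[OF n9 b1(2)] b2(2) by simp
    next
      case 3
      hence "m y = x \<or> m x = z" using B[of y x z] S b1 b2 by simp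
      thus ?thesis using b1 b2 3 by simp
    next
      case 4
      hence "m w = y \<or> m y = x" using B[of w y x] S b1 b2 by simp
      thus ?thesis using b1 b2 4 by simp
    qed
  qed
  show "inj_on (\<lambda>u. 2 * m u) S"
    by (rule inj_onI) (metis M1 mult_cancel_left zero_neq_numeral)
qed

lemma RM_union:
  assumes d: "S1 \<inter> S2 = {}" and r1: "RM S1 E r" and r2: "RM S2 E r"
    and c: "\<And>x y. x \<in> S1 \<Longrightarrow> y \<in> S2 \<Longrightarrow> \<not> (E x y \<and> r y < r x) \<and> \<not> (E y x \<and> r x < r y)"
  shows "RM (S1 \<union> S2) E r"
  unfolding RM_def
proof (intro ballI impI)
  fix x y z w assume S: "x \<in> S1 \<union> S2" "y \<in> S1 \<union> S2" "z \<in> S1 \<union> S2" "w \<in> S1 \<union> S2"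
    and h: "E x y \<and> r y < r x \<and> E z w \<and> r w < r z \<and> (x = z \<or> x = w \<or> y = z \<or> y = w)"
  have xy: "(x \<in> S1 \<and> y \<in> S1) \<or> (x \<in> S2 \<and> y \<in> S2)" using S c h by blast
  have zw: "(z \<in> S1 \<and> w \<in> S1) \<or> (z \<in> S2 \<and> w \<in> S2)" using S c h by blast
  have "(x \<in> S1 \<and> y \<in> S1 \<and> z \<in> S1 \<and> w \<in> S1) \<or> (x \<in> S2 \<and> y \<in> S2 \<and> z \<in> S2 \<and> w \<in> S2)"
    using xy zw h d by blast
  thus "x = z \<and> y = w"
    using RM_D[OF r1, of x y z w] RM_D[OF r2, of x y z w] h by blast
qed

definition mt :: "(nat \<Rightarrow> bool) \<Rightarrow> nat \<Rightarrow> nat" where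
  "mt sw u = (if sw u then Suc u else if 0 < u \<and> sw (u - 1) then u - 1 else u)"

lemma sw_mate:
  fixes S :: "nat set"
  assumes a: "\<And>u. sw u \<Longrightarrow> u \<in> S \<and> Suc u \<in> S"
    and b: "\<And>u. sw u \<Longrightarrow> \<not> sw (Suc u)"
    and c: "\<And>u. sw u \<Longrightarrow> pe n u (Suc u)"
  shows "\<And>u. u \<in> S \<Longrightarrow> mt sw u \<in> S \<and> mt sw (mt sw u) = u"
    and "\<And>u w. u \<in> S \<Longrightarrow> w \<in> S \<Longrightarrow> \<not> (u < w \<and> w < mt sw u) \<and> \<not> (mt sw u < w \<and> w < u)"
    and "\<And>u. u \<in> S \<Longrightarrow> u < mt sw u \<Longrightarrow> pe n u (mt sw u)"
proof -
  fix u assume u: "u \<in> S"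
  show "mt sw u \<in> S \<and> mt sw (mt sw u) = u"
  proof (cases "sw u")
    case True thus ?thesis using a b by (simp add: mt_def)
  next
    case False
    show ?thesis
    proof (cases "0 < u \<and> sw (u - 1)")
      case True
      hence "Suc (u - 1) = u" by simp
      thus ?thesis using True False a[of "u - 1"] by (simp add: mt_def)
    next
      case False2: False
      thus ?thesis using False u by (auto simp: mt_def)
    qed
  qed
next
  fix u w show "\<not> (u < w \<and> w < mt sw u) \<and> \<not> (mt sw u < w \<and> w < u)"
    by (auto simp: mt_def)
next
  fix u assume "u \<in> S" "u < mt sw u"
  thus "pe n u (mt sw u)" using c by (auto simp: mt_def split: if_splits)
qed

lemma mt_sw: "sw a \<Longrightarrow> mt sw a = Suc a" by (simp add: mt_def)

lemma triples:
  assumes "9 \<le> n" "pe n a b" "pe n b c" "c < n"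
  shows "(b = Suc a \<and> c = Suc b \<and> 3 \<le> a \<and> a + 6 \<le> n) \<or> (a = 0 \<and> b = 1 \<and> c = 3)
    \<or> (a = 1 \<and> b = 3 \<and> c = 4) \<or> (a + 5 = n \<and> b + 4 = n \<and> c + 2 = n)
    \<or> (a + 4 = n \<and> b + 2 = n \<and> c + 1 = n)"
  using assms(2,3) unfolding pe_def
proof (elim disjE conjE)
  assume "b = Suc a" "c = Suc b" "a \<noteq> 1" "b \<noteq> 1" "a \<noteq> 2" "b \<noteq> 2" "a + 4 \<noteq> n" "a + 3 \<noteq> n" "b + 4 \<noteq> n" "b + 3 \<noteq> n"
  hence "3 \<le> a \<and> a + 6 \<le> n" using assms(1,4) by linarith
  thus ?thesis using \<open>b = Suc a\<close> \<open>c = Suc b\<close> by simp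
qed (use assms(1) in simp_all)

definition swg :: "nat \<Rightarrow> nat \<Rightarrow> nat \<Rightarrow> bool" where
  "swg n v u \<longleftrightarrow> (u = 0 \<and> v \<noteq> 1) \<or> (odd u \<and> 3 \<le> u \<and> u + 1 < v \<and> u + 5 \<le> n)
     \<or> (even u \<and> 4 \<le> u \<and> u + 5 \<le> n \<and> v < u) \<or> (u + 2 = n \<and> v + 2 \<noteq> n \<and> v + 1 \<noteq> n)"

lemma gen_case:
  assumes nk: "n = 2 * k + 9" and v: "v < n" "v \<noteq> 0" "v \<noteq> 2" "v + 3 \<noteq> n" "v + 1 \<noteq> n"
  shows "RM ({..<n} - {v}) (TE n) (\<lambda>u. 2 * mt (swg n v) u)"
    and "inj_on (\<lambda>u. 2 * mt (swg n v) u) ({..<n} - {v})"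
proof -
  let ?S = "{..<n} - {v}"
  have a: "\<And>u. swg n v u \<Longrightarrow> u \<in> ?S \<and> Suc u \<in> ?S" using nk v by (auto simp: swg_def)
  have b: "\<And>u. swg n v u \<Longrightarrow> \<not> swg n v (Suc u)" using nk v by (auto simp: swg_def)
  have c: "\<And>u. swg n v u \<Longrightarrow> pe n u (Suc u)" using nk v by (auto simp: swg_def pe_def)
  note M = sw_mate[of "swg n v" ?S n, OF a b c]
  have B: "mt (swg n v) a = b \<or> mt (swg n v) b = c"
    if abc: "a \<in> ?S" "b \<in> ?S" "c \<in> ?S" and p: "pe n a b" "pe n b c" for a b c
  proof -
    have "9 \<le> n" using nk by simp
    moreover have "c < n" using abc by simp
    ultimately have tr: "(b = Suc a \<and> c = Suc b \<and> 3 \<le> a \<and> a + 6 \<le> n) \<or> (a = 0 \<and> b = 1 \<and> c = 3)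
    \<or> (a = 1 \<and> b = 3 \<and> c = 4) \<or> (a + 5 = n \<and> b + 4 = n \<and> c + 2 = n)
    \<or> (a + 4 = n \<and> b + 2 = n \<and> c + 1 = n)" using triples p by blast
    from tr
    have "swg n v a \<and> b = Suc a \<or> swg n v b \<and> c = Suc b"
    proof (elim disjE conjE)
      assume h: "b = Suc a" "c = Suc b" "3 \<le> a" "a + 6 \<le> n"
      have "a \<noteq> v" "Suc a \<noteq> v" "Suc (Suc a) \<noteq> v" using abc h by auto
      hence "swg n v a \<or> swg n v (Suc a)" using h v unfolding swg_def by presburger
      thus ?thesis using h by auto
    next
      assume h: "a = 0" "b = 1" "c = 3"
      thus ?thesis using abc by (auto simp: swg_def)
    next
      assume h: "a = 1" "b = 3" "c = 4"
      hence "4 < v" using abc v by auto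
      thus ?thesis using h nk by (auto simp: swg_def)
    next
      assume h: "a + 5 = n" "b + 4 = n" "c + 2 = n"
      hence "v < a" using abc v by auto
      moreover have "even a" using h nk by presburger
      ultimately show ?thesis using h nk by (auto simp: swg_def)
    next
      assume h: "a + 4 = n" "b + 2 = n" "c + 1 = n"
      thus ?thesis using abc v by (auto simp: swg_def)
    qed
    thus ?thesis using mt_sw by metis
  qed
  have n9: "9 \<le> n" using nk by simp
  show "RM ?S (TE n) (\<lambda>u. 2 * mt (swg n v) u)" "inj_on (\<lambda>u. 2 * mt (swg n v) u) ?S"
    using inv_RM[OF n9 M B] by blast+
qed

lemma mt_adj: "\<not> (u < w \<and> w < mt sw u) \<and> \<not> (mt sw u < w \<and> w < u)"
  by (auto simp: mt_def)

lemma mate_ext: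
  fixes S0 :: "nat set" and m0 :: "nat \<Rightarrow> nat"
  assumes M1: "\<And>u. u \<in> S0 \<Longrightarrow> m0 u \<in> S0 \<and> m0 (m0 u) = u"
    and M2: "\<And>u w. u \<in> S0 \<Longrightarrow> \<not> (u < w \<and> w < m0 u) \<and> \<not> (m0 u < w \<and> w < u)"
    and M3: "\<And>u. u \<in> S0 \<Longrightarrow> u < m0 u \<Longrightarrow> pe n u (m0 u)"
    and pq: "p < q" "p \<notin> S0" "q \<notin> S0" "pe n p q" "\<And>w. w \<in> S0 \<Longrightarrow> \<not> (p < w \<and> w < q)"
  defines "m \<equiv> (\<lambda>u. if u = p then q else if u = q then p else m0 u)"
  shows "\<And>u. u \<in> S0 \<union> {p, q} \<Longrightarrow> m u \<in> S0 \<union> {p, q} \<and> m (m u) = u"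
    and "\<And>u w. u \<in> S0 \<union> {p, q} \<Longrightarrow> w \<in> S0 \<union> {p, q} \<Longrightarrow> \<not> (u < w \<and> w < m u) \<and> \<not> (m u < w \<and> w < u)"
    and "\<And>u. u \<in> S0 \<union> {p, q} \<Longrightarrow> u < m u \<Longrightarrow> pe n u (m u)"
proof -
  fix u assume u: "u \<in> S0 \<union> {p, q}"
  show "m u \<in> S0 \<union> {p, q} \<and> m (m u) = u"
  proof (cases "u \<in> S0")
    case True
    hence "u \<noteq> p" "u \<noteq> q" "m0 u \<noteq> p" "m0 u \<noteq> q" using M1 pq by metis+
    thus ?thesis using True M1 by (simp add: m_def)
  next
    case False thus ?thesis using u pq by (auto simp: m_def)
  qed
next
  fix u w assume u: "u \<in> S0 \<union> {p, q}" and w: "w \<in> S0 \<union> {p, q}"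
  show "\<not> (u < w \<and> w < m u) \<and> \<not> (m u < w \<and> w < u)"
  proof (cases "u \<in> S0")
    case True
    hence "u \<noteq> p" "u \<noteq> q" using pq by metis+
    thus ?thesis using True M2 by (simp add: m_def)
  next
    case False thus ?thesis using u w pq by (auto simp: m_def)
  qed
next
  fix u assume u: "u \<in> S0 \<union> {p, q}" "u < m u"
  show "pe n u (m u)"
  proof (cases "u \<in> S0")
    case True
    hence "u \<noteq> p" "u \<noteq> q" using pq by metis+
    thus ?thesis using True M3 u by (simp add: m_def)
  next
    case False thus ?thesis using u pq by (auto simp: m_def)
  qed
qed

lemma RM_cong: "(\<And>u. u \<in> S \<Longrightarrow> r u = r' u) \<Longrightarrow> RM S E r \<longleftrightarrow> RM S E r'"
  unfolding RM_def by auto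

lemma inj_cong: "(\<And>u. u \<in> S \<Longrightarrow> r u = r' u) \<Longrightarrow> inj_on r S \<longleftrightarrow> inj_on r' S"
  by (rule inj_on_cong)

definition sw2 :: "nat \<Rightarrow> nat \<Rightarrow> bool" where
  "sw2 n u \<longleftrightarrow> (even u \<and> 4 \<le> u \<and> u + 5 \<le> n) \<or> u + 2 = n"

definition m2 :: "nat \<Rightarrow> nat \<Rightarrow> nat" where
  "m2 n u = (if u = 1 then 3 else if u = 3 then 1 else mt (sw2 n) u)"

lemma case2:
  assumes nk: "n = 2 * k + 9"
  shows "RM ({..<n} - {2}) (TE n) (\<lambda>u. 2 * m2 n u)" and "inj_on (\<lambda>u. 2 * m2 n u) ({..<n} - {2})"
proof -
  let ?S0 = "{..<n} - {1, 2, 3}"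
  have a: "\<And>u. sw2 n u \<Longrightarrow> u \<in> ?S0 \<and> Suc u \<in> ?S0" using nk by (auto simp: sw2_def)
  have b: "\<And>u. sw2 n u \<Longrightarrow> \<not> sw2 n (Suc u)" using nk by (auto simp: sw2_def)
  have c: "\<And>u. sw2 n u \<Longrightarrow> pe n u (Suc u)" using nk by (auto simp: sw2_def pe_def)
  note M = sw_mate[of "sw2 n" ?S0 n, OF a b c]
  have pq: "(1::nat) < 3" "1 \<notin> ?S0" "3 \<notin> ?S0" "pe n 1 3" "\<And>w. w \<in> ?S0 \<Longrightarrow> \<not> (1 < w \<and> w < 3)"
    by (auto simp: pe_def)
  have eqS: "?S0 \<union> {1, 3} = {..<n} - {2}" using nk by auto
  have meq: "m2 n = (\<lambda>u. if u = 1 then 3 else if u = 3 then 1 else mt (sw2 n) u)"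
    by (simp add: m2_def fun_eq_iff)
  have M1: "\<And>u. u \<in> ?S0 \<Longrightarrow> mt (sw2 n) u \<in> ?S0 \<and> mt (sw2 n) (mt (sw2 n) u) = u" by (rule M(1))
  have M2: "\<And>u w. u \<in> ?S0 \<Longrightarrow> \<not> (u < w \<and> w < mt (sw2 n) u) \<and> \<not> (mt (sw2 n) u < w \<and> w < u)"
    by (rule mt_adj)
  have M3: "\<And>u. u \<in> ?S0 \<Longrightarrow> u < mt (sw2 n) u \<Longrightarrow> pe n u (mt (sw2 n) u)" by (rule M(3))
  note E0 = mate_ext[of ?S0 "mt (sw2 n)" n 1 3, OF M1 M2 M3 pq]
  have E1: "\<And>u. u \<in> {..<n} - {2} \<Longrightarrow> m2 n u \<in> {..<n} - {2} \<and> m2 n (m2 n u) = u"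
    using E0(1) unfolding meq eqS by blast
  have E2: "\<And>u w. u \<in> {..<n} - {2} \<Longrightarrow> w \<in> {..<n} - {2} \<Longrightarrow> \<not> (u < w \<and> w < m2 n u) \<and> \<not> (m2 n u < w \<and> w < u)"
    using E0(2) unfolding meq eqS by blast
  have E3: "\<And>u. u \<in> {..<n} - {2} \<Longrightarrow> u < m2 n u \<Longrightarrow> pe n u (m2 n u)"
    using E0(3) unfolding meq eqS by blast
  have B: "m2 n a = b \<or> m2 n b = c"
    if abc: "a \<in> {..<n} - {2}" "b \<in> {..<n} - {2}" "c \<in> {..<n} - {2}" and p: "pe n a b" "pe n b c" for a b c
  proof -
    have "9 \<le> n" using nk by simp
    moreover have "c < n" using abc by simp
    ultimately have tr: "(b = Suc a \<and> c = Suc b \<and> 3 \<le> a \<and> a + 6 \<le> n) \<or> (a = 0 \<and> b = 1 \<and> c = 3)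
    \<or> (a = 1 \<and> b = 3 \<and> c = 4) \<or> (a + 5 = n \<and> b + 4 = n \<and> c + 2 = n)
    \<or> (a + 4 = n \<and> b + 2 = n \<and> c + 1 = n)" using triples p by blast
    from tr show ?thesis
    proof (elim disjE conjE)
      assume h: "b = Suc a" "c = Suc b" "3 \<le> a" "a + 6 \<le> n"
      have "sw2 n a \<or> sw2 n (Suc a)" using h unfolding sw2_def by presburger
      moreover have "a \<noteq> 1" "a \<noteq> 3 \<or> sw2 n (Suc a)" "Suc a \<noteq> 1" "Suc a \<noteq> 3"
        using h by (auto simp: sw2_def)
      ultimately show ?thesis using h by (auto simp: m2_def mt_sw)
    next
      assume h: "a = 0" "b = 1" "c = 3"
      thus ?thesis by (simp add: m2_def)
    next
      assume h: "a = 1" "b = 3" "c = 4"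
      thus ?thesis by (simp add: m2_def)
    next
      assume h: "a + 5 = n" "b + 4 = n" "c + 2 = n"
      hence "sw2 n a" using nk unfolding sw2_def by presburger
      moreover have "a \<noteq> 1" "a \<noteq> 3" using h nk by auto
      ultimately show ?thesis using h by (simp add: m2_def mt_sw)
    next
      assume h: "a + 4 = n" "b + 2 = n" "c + 1 = n"
      hence "sw2 n b" by (simp add: sw2_def)
      moreover have "b \<noteq> 1" "b \<noteq> 3" using h nk by auto
      ultimately show ?thesis using h by (simp add: m2_def mt_sw)
    qed
  qed
  have n9: "9 \<le> n" using nk by simp
  show "RM ({..<n} - {2}) (TE n) (\<lambda>u. 2 * m2 n u)" "inj_on (\<lambda>u. 2 * m2 n u) ({..<n} - {2})"
    using inv_RM[OF n9 E1 E2 E3 B] by blast+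
qed

definition swM :: "nat \<Rightarrow> nat \<Rightarrow> bool" where
  "swM n u \<longleftrightarrow> u = 0 \<or> (odd u \<and> 3 \<le> u \<and> u + 5 \<le> n)"

definition mM :: "nat \<Rightarrow> nat \<Rightarrow> nat" where
  "mM n u = (if u + 4 = n then n - 2 else if u + 2 = n then n - 4 else mt (swM n) u)"

lemma caseM:
  assumes nk: "n = 2 * k + 9"
  shows "RM ({..<n} - {n - 3}) (TE n) (\<lambda>u. 2 * mM n u)" and "inj_on (\<lambda>u. 2 * mM n u) ({..<n} - {n - 3})"
proof -
  let ?S0 = "{..<n} - {n - 4, n - 3, n - 2}"
  have a: "\<And>u. swM n u \<Longrightarrow> u \<in> ?S0 \<and> Suc u \<in> ?S0"
  proof -
    fix u assume "swM n u"
    hence "u = 0 \<or> (odd u \<and> 3 \<le> u \<and> u + 5 \<le> n)" by (simp add: swM_def)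
    moreover have "odd u \<Longrightarrow> u + 5 \<noteq> n" using nk by presburger
    ultimately show "u \<in> ?S0 \<and> Suc u \<in> ?S0" using nk by auto
  qed
  have b: "\<And>u. swM n u \<Longrightarrow> \<not> swM n (Suc u)" using nk by (auto simp: swM_def)
  have c: "\<And>u. swM n u \<Longrightarrow> pe n u (Suc u)"
  proof -
    fix u assume "swM n u"
    hence "u = 0 \<or> (odd u \<and> 3 \<le> u \<and> u + 5 \<le> n)" by (simp add: swM_def)
    moreover have "odd u \<Longrightarrow> u + 5 \<noteq> n" using nk by presburger
    ultimately show "pe n u (Suc u)" using nk by (auto simp: pe_def)
  qed
  note M = sw_mate[of "swM n" ?S0 n, OF a b c]
  have pq: "n - 4 < n - 2" "n - 4 \<notin> ?S0" "n - 2 \<notin> ?S0" "pe n (n - 4) (n - 2)"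
    "\<And>w. w \<in> ?S0 \<Longrightarrow> \<not> (n - 4 < w \<and> w < n - 2)"
    using nk by (auto simp: pe_def)
  have eqS: "?S0 \<union> {n - 4, n - 2} = {..<n} - {n - 3}" using nk by auto
  have meq: "mM n = (\<lambda>u. if u = n - 4 then n - 2 else if u = n - 2 then n - 4 else mt (swM n) u)"
    using nk by (auto simp: mM_def fun_eq_iff)
  have M1: "\<And>u. u \<in> ?S0 \<Longrightarrow> mt (swM n) u \<in> ?S0 \<and> mt (swM n) (mt (swM n) u) = u" by (rule M(1))
  have M2: "\<And>u w. u \<in> ?S0 \<Longrightarrow> \<not> (u < w \<and> w < mt (swM n) u) \<and> \<not> (mt (swM n) u < w \<and> w < u)"
    by (rule mt_adj)
  have M3: "\<And>u. u \<in> ?S0 \<Longrightarrow> u < mt (swM n) u \<Longrightarrow> pe n u (mt (swM n) u)" by (rule M(3))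
  note E0 = mate_ext[of ?S0 "mt (swM n)" n "n - 4" "n - 2", OF M1 M2 M3 pq]
  have E1: "\<And>u. u \<in> {..<n} - {n - 3} \<Longrightarrow> mM n u \<in> {..<n} - {n - 3} \<and> mM n (mM n u) = u"
    using E0(1) unfolding meq eqS by blast
  have E2: "\<And>u w. u \<in> {..<n} - {n - 3} \<Longrightarrow> w \<in> {..<n} - {n - 3} \<Longrightarrow> \<not> (u < w \<and> w < mM n u) \<and> \<not> (mM n u < w \<and> w < u)"
    using E0(2) unfolding meq eqS by blast
  have E3: "\<And>u. u \<in> {..<n} - {n - 3} \<Longrightarrow> u < mM n u \<Longrightarrow> pe n u (mM n u)"
    using E0(3) unfolding meq eqS by blast
  have B: "mM n a = b \<or> mM n b = c"
    if abc: "a \<in> {..<n} - {n - 3}" "b \<in> {..<n} - {n - 3}" "c \<in> {..<n} - {n - 3}" and p: "pe n a b" "pe n b c" for a b c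
  proof -
    have "9 \<le> n" using nk by simp
    moreover have "c < n" using abc by simp
    ultimately have tr: "(b = Suc a \<and> c = Suc b \<and> 3 \<le> a \<and> a + 6 \<le> n) \<or> (a = 0 \<and> b = 1 \<and> c = 3)
    \<or> (a = 1 \<and> b = 3 \<and> c = 4) \<or> (a + 5 = n \<and> b + 4 = n \<and> c + 2 = n)
    \<or> (a + 4 = n \<and> b + 2 = n \<and> c + 1 = n)" using triples p by blast
    from tr show ?thesis
    proof (elim disjE conjE)
      assume h: "b = Suc a" "c = Suc b" "3 \<le> a" "a + 6 \<le> n"
      have "swM n a \<or> swM n (Suc a)" using h unfolding swM_def by presburger
      moreover have "a + 4 \<noteq> n" "a + 2 \<noteq> n" "Suc a + 4 \<noteq> n" "Suc a + 2 \<noteq> n" using h by auto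
      ultimately show ?thesis using h by (auto simp: mM_def mt_sw)
    next
      assume h: "a = 0" "b = 1" "c = 3"
      thus ?thesis using nk by (simp add: mM_def mt_sw swM_def)
    next
      assume h: "a = 1" "b = 3" "c = 4"
      thus ?thesis using nk by (simp add: mM_def mt_sw swM_def)
    next
      assume h: "a + 5 = n" "b + 4 = n" "c + 2 = n"
      hence "c = n - 2" by simp
      thus ?thesis using h by (simp add: mM_def)
    next
      assume h: "a + 4 = n" "b + 2 = n" "c + 1 = n"
      hence "b = n - 2" by simp
      thus ?thesis using h by (simp add: mM_def)
    qed
  qed
  have n9: "9 \<le> n" using nk by simp
  show "RM ({..<n} - {n - 3}) (TE n) (\<lambda>u. 2 * mM n u)" "inj_on (\<lambda>u. 2 * mM n u) ({..<n} - {n - 3})"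
    using inv_RM[OF n9 E1 E2 E3 B] by blast+
qed

definition r0 :: "nat \<Rightarrow> nat \<Rightarrow> nat" where
  "r0 n u = (if u = 1 then 7 else if u = 2 then 5 else 2 * mt (sw2 n) u)"

lemma case0:
  assumes nk: "n = 2 * k + 9"
  shows "RM ({..<n} - {0}) (TE n) (r0 n)" and "inj_on (r0 n) ({..<n} - {0})"
proof -
  let ?S = "{..<n} - {0, 1, 2}"
  have a: "\<And>u. sw2 n u \<Longrightarrow> u \<in> ?S \<and> Suc u \<in> ?S" using nk by (auto simp: sw2_def)
  have b: "\<And>u. sw2 n u \<Longrightarrow> \<not> sw2 n (Suc u)" using nk by (auto simp: sw2_def)
  have c: "\<And>u. sw2 n u \<Longrightarrow> pe n u (Suc u)" using nk by (auto simp: sw2_def pe_def)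
  note M = sw_mate[of "sw2 n" ?S n, OF a b c]
  have B: "mt (sw2 n) a = b \<or> mt (sw2 n) b = c"
    if abc: "a \<in> ?S" "b \<in> ?S" "c \<in> ?S" and p: "pe n a b" "pe n b c" for a b c
  proof -
    have "9 \<le> n" using nk by simp
    moreover have "c < n" using abc by simp
    ultimately have tr: "(b = Suc a \<and> c = Suc b \<and> 3 \<le> a \<and> a + 6 \<le> n) \<or> (a = 0 \<and> b = 1 \<and> c = 3)
    \<or> (a = 1 \<and> b = 3 \<and> c = 4) \<or> (a + 5 = n \<and> b + 4 = n \<and> c + 2 = n)
    \<or> (a + 4 = n \<and> b + 2 = n \<and> c + 1 = n)" using triples p by blast
    from tr show ?thesis
    proof (elim disjE conjE)
      assume h: "b = Suc a" "c = Suc b" "3 \<le> a" "a + 6 \<le> n"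
      have "sw2 n a \<or> sw2 n (Suc a)" using h unfolding sw2_def by presburger
      thus ?thesis using h by (auto simp: mt_sw)
    next
      assume h: "a = 0" "b = 1" "c = 3" thus ?thesis using abc by simp
    next
      assume h: "a = 1" "b = 3" "c = 4" thus ?thesis using abc by simp
    next
      assume h: "a + 5 = n" "b + 4 = n" "c + 2 = n"
      hence "sw2 n a" using nk unfolding sw2_def by presburger
      thus ?thesis using h by (simp add: mt_sw)
    next
      assume h: "a + 4 = n" "b + 2 = n" "c + 1 = n"
      hence "sw2 n b" by (simp add: sw2_def)
      thus ?thesis using h by (simp add: mt_sw)
    qed
  qed
  have n9: "9 \<le> n" using nk by simp
  have M2: "\<And>u w. u \<in> ?S \<Longrightarrow> w \<in> ?S \<Longrightarrow> \<not> (u < w \<and> w < mt (sw2 n) u) \<and> \<not> (mt (sw2 n) u < w \<and> w < u)"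
    by (rule mt_adj)
  note I = inv_RM[OF n9 M(1) M2 M(3) B]
  have eq: "\<And>u. u \<in> ?S \<Longrightarrow> r0 n u = 2 * mt (sw2 n) u" by (auto simp: r0_def)
  have R2: "RM ?S (TE n) (r0 n)" by (rule iffD2[OF RM_cong[OF eq] I(1)])
  have inj2: "inj_on (r0 n) ?S" by (rule iffD2[OF inj_cong[OF eq] I(2)])
  have R1: "RM {1, 2} (TE n) (r0 n)"
    unfolding RM_def using nk by (auto simp: r0_def TE_def pe_def)
  have mt3: "3 \<le> mt (sw2 n) y \<and> (mt (sw2 n) y = 3 \<longrightarrow> y = 3)" if y: "y \<in> ?S" for y
  proof -
    have y3: "3 \<le> y" using y by auto
    show ?thesis
    proof (cases "sw2 n y")
      case True thus ?thesis using y3 by (simp add: mt_def)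
    next
      case False
      show ?thesis
      proof (cases "sw2 n (y - 1)")
        case True
        hence "4 \<le> y - 1 \<or> y - 1 + 2 = n" by (auto simp: sw2_def)
        thus ?thesis using True False y3 n9 by (auto simp: mt_def)
      next
        case False2: False
        thus ?thesis using False y3 by (simp add: mt_def)
      qed
    qed
  qed
  have cross: "\<not> (TE n x y \<and> r0 n y < r0 n x) \<and> \<not> (TE n y x \<and> r0 n x < r0 n y)"
    if x: "x \<in> {1, 2}" and y: "y \<in> ?S" for x y
  proof -
    have y3: "3 \<le> y" using y by auto
    have r6: "6 \<le> r0 n y" and r3: "r0 n y < 7 \<longrightarrow> y = 3"
      using mt3[OF y] y by (auto simp: r0_def)
    show ?thesis
    proof (cases "x = 1")
      case True
      have "\<not> TE n 1 3" using nk by (simp add: TE_def pe_def)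
      moreover have "TE n y 1 \<Longrightarrow> y = 3" using y3 nk by (auto simp: TE_def pe_def)
      moreover have "r0 n 3 = 6" using nk by (simp add: r0_def mt_def sw2_def)
      ultimately show ?thesis using True r3 by (auto simp: r0_def)
    next
      case False
      hence x2: "x = 2" using x by simp
      have "\<not> TE n y 2" using y3 n9 by (auto simp: TE_def pe_def)
      thus ?thesis using x2 r6 by (simp add: r0_def)
    qed
  qed
  have un: "{1, 2} \<union> ?S = {..<n} - {0}" using nk by auto
  have d: "{1, 2} \<inter> ?S = {}" by auto
  have "RM ({1, 2} \<union> ?S) (TE n) (r0 n)" by (rule RM_union[OF d R1 R2 cross])
  thus "RM ({..<n} - {0}) (TE n) (r0 n)" unfolding un .
  have odd12: "r0 n 1 = 7" "r0 n 2 = 5" by (simp_all add: r0_def)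
  have evS: "\<And>u. u \<in> ?S \<Longrightarrow> even (r0 n u)" using eq by simp
  have ne: "r0 n x \<noteq> r0 n y" if xy: "x \<in> ?S" "y \<in> {1, 2}" for x y
  proof -
    have "even (r0 n x)" using evS xy(1) .
    moreover have "odd (r0 n y)" using xy(2) odd12 by auto
    ultimately show ?thesis by metis
  qed
  have inj1: "inj_on (r0 n) {1, 2}" using odd12 by (simp add: inj_on_def)
  have "inj_on (r0 n) ({1, 2} \<union> ?S)"
  proof -
    have "r0 n ` ({1, 2} - ?S) \<inter> r0 n ` (?S - {1, 2}) = {}"
    proof (rule equals0I)
      fix z assume z: "z \<in> r0 n ` ({1, 2} - ?S) \<inter> r0 n ` (?S - {1, 2})"
      hence z1: "z \<in> r0 n ` ({1, 2} - ?S)" and z2: "z \<in> r0 n ` (?S - {1, 2})" by (rule IntD1, rule IntD2)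
      from z1 obtain a where a: "a \<in> {1, 2} - ?S" "z = r0 n a" by (rule imageE)
      from z2 obtain b where b: "b \<in> ?S - {1, 2}" "z = r0 n b" by (rule imageE)
      have bS: "b \<in> ?S" using b(1) by (rule DiffD1)
      have a12: "a \<in> {1, 2}" using a(1) by (rule DiffD1)
      have "r0 n b \<noteq> r0 n a" by (rule ne[OF bS a12])
      thus False using a(2) b(2) by simp
    qed
    thus ?thesis unfolding inj_on_Un using inj1 inj2 by simp
  qed
  thus "inj_on (r0 n) ({..<n} - {0})" unfolding un .
qed

definition rL :: "nat \<Rightarrow> nat \<Rightarrow> nat" where
  "rL n u = (if u + 2 = n then 2 * n - 9 else if u + 3 = n then 2 * n - 7 else 2 * mt (swM n) u)"

lemma caseL:
  assumes nk: "n = 2 * k + 9"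
  shows "RM ({..<n} - {n - 1}) (TE n) (rL n)" and "inj_on (rL n) ({..<n} - {n - 1})"
proof -
  let ?S = "{..<n - 3}"
  have n9: "9 \<le> n" using nk by simp
  have a: "\<And>u. swM n u \<Longrightarrow> u \<in> ?S \<and> Suc u \<in> ?S" using n9 by (auto simp: swM_def)
  have b: "\<And>u. swM n u \<Longrightarrow> \<not> swM n (Suc u)" using n9 by (auto simp: swM_def)
  have c: "\<And>u. swM n u \<Longrightarrow> pe n u (Suc u)"
  proof -
    fix u assume "swM n u"
    hence "u = 0 \<or> (odd u \<and> 3 \<le> u \<and> u + 5 \<le> n)" by (simp add: swM_def)
    moreover have "odd u \<Longrightarrow> u + 5 \<noteq> n" using nk by presburger
    ultimately show "pe n u (Suc u)" using nk by (auto simp: pe_def)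
  qed
  note M = sw_mate[of "swM n" ?S n, OF a b c]
  have B: "mt (swM n) a = b \<or> mt (swM n) b = c"
    if abc: "a \<in> ?S" "b \<in> ?S" "c \<in> ?S" and p: "pe n a b" "pe n b c" for a b c
  proof -
    have "c < n" using abc by simp
    hence tr: "(b = Suc a \<and> c = Suc b \<and> 3 \<le> a \<and> a + 6 \<le> n) \<or> (a = 0 \<and> b = 1 \<and> c = 3)
    \<or> (a = 1 \<and> b = 3 \<and> c = 4) \<or> (a + 5 = n \<and> b + 4 = n \<and> c + 2 = n)
    \<or> (a + 4 = n \<and> b + 2 = n \<and> c + 1 = n)" using triples p n9 by blast
    from tr show ?thesis
    proof (elim disjE conjE)
      assume h: "b = Suc a" "c = Suc b" "3 \<le> a" "a + 6 \<le> n"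
      have "swM n a \<or> swM n (Suc a)" using h unfolding swM_def by presburger
      thus ?thesis using h by (auto simp: mt_sw)
    next
      assume h: "a = 0" "b = 1" "c = 3" thus ?thesis by (simp add: mt_sw swM_def)
    next
      assume h: "a = 1" "b = 3" "c = 4" thus ?thesis using n9 by (simp add: mt_sw swM_def)
    next
      assume h: "a + 5 = n" "b + 4 = n" "c + 2 = n" thus ?thesis using abc by simp
    next
      assume h: "a + 4 = n" "b + 2 = n" "c + 1 = n" thus ?thesis using abc by simp
    qed
  qed
  have M2: "\<And>u w. u \<in> ?S \<Longrightarrow> w \<in> ?S \<Longrightarrow> \<not> (u < w \<and> w < mt (swM n) u) \<and> \<not> (mt (swM n) u < w \<and> w < u)"
    by (rule mt_adj)
  note I = inv_RM[OF n9 M(1) M2 M(3) B]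
  have eq: "\<And>u. u \<in> ?S \<Longrightarrow> rL n u = 2 * mt (swM n) u" by (auto simp: rL_def)
  have R2: "RM ?S (TE n) (rL n)" by (rule iffD2[OF RM_cong[OF eq] I(1)])
  have inj2: "inj_on (rL n) ?S" by (rule iffD2[OF inj_cong[OF eq] I(2)])
  have ar: "n - 2 + 2 = n" "n - 3 + 3 = n" "n - 3 + 2 \<noteq> n" using n9 by auto
  have v1: "rL n (n - 2) = 2 * n - 9" "rL n (n - 3) = 2 * n - 7" unfolding rL_def using ar by simp_all
  have R1: "RM {n - 3, n - 2} (TE n) (rL n)"
    unfolding RM_def using n9 v1 by (auto simp: TE_def pe_def)
  have mtL: "mt (swM n) y \<le> n - 4 \<and> (mt (swM n) y = n - 4 \<longrightarrow> y = n - 4)" if y: "y \<in> ?S" for y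
  proof -
    have yl: "y + 4 \<le> n" using y by auto
    show ?thesis
    proof (cases "swM n y")
      case True
      hence "y = 0 \<or> (odd y \<and> 3 \<le> y \<and> y + 5 \<le> n)" by (simp add: swM_def)
      moreover have "odd y \<Longrightarrow> y + 5 \<noteq> n" using nk by presburger
      ultimately show ?thesis using True n9 by (auto simp: mt_def)
    next
      case False
      show ?thesis
      proof (cases "0 < y \<and> swM n (y - 1)")
        case True thus ?thesis using False yl by (auto simp: mt_def)
      next
        case False2: False
        thus ?thesis using False yl by (auto simp: mt_def)
      qed
    qed
  qed
  have cross: "\<not> (TE n x y \<and> rL n y < rL n x) \<and> \<not> (TE n y x \<and> rL n x < rL n y)"
    if x: "x \<in> {n - 3, n - 2}" and y: "y \<in> ?S" for x y
  proof -
    have yl: "y + 4 \<le> n" using y by auto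
    have ry: "rL n y = 2 * mt (swM n) y" using eq y by simp
    have r8: "rL n y \<le> 2 * n - 8" and r8e: "rL n y = 2 * n - 8 \<longrightarrow> y = n - 4"
      using mtL[OF y] ry by auto
    show ?thesis
    proof (cases "x = n - 3")
      case True
      have "\<not> TE n (n - 3) y" using yl n9 by (auto simp: TE_def pe_def)
      moreover have "\<not> 2 * n - 7 < rL n y" using r8 n9 by linarith
      ultimately show ?thesis using True v1 by simp
    next
      case False
      hence x2: "x = n - 2" using x by simp
      have "TE n (n - 2) y \<Longrightarrow> y = n - 4" using yl n9 by (auto simp: TE_def pe_def)
      moreover have "\<not> TE n (n - 4) (n - 2)" using n9 by (auto simp: TE_def pe_def)
      moreover have "rL n (n - 4) = 2 * n - 8"
      proof -
        have s1: "\<not> swM n (n - 4)" using n9 by (simp add: swM_def)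
        have "n - 4 - 1 = 2 * k + 4" using nk by simp
        hence s2: "\<not> swM n (n - 4 - 1)" by (simp add: swM_def)
        have "mt (swM n) (n - 4) = n - 4" using s1 s2 by (simp add: mt_def)
        moreover have "n - 4 + 2 \<noteq> n" "n - 4 + 3 \<noteq> n" "2 * (n - 4) = 2 * n - 8" using n9 by auto
        ultimately show ?thesis unfolding rL_def by simp
      qed
      ultimately show ?thesis using x2 v1 r8 r8e n9 by auto
    qed
  qed
  have un: "{n - 3, n - 2} \<union> ?S = {..<n} - {n - 1}" using n9 by auto
  have d: "{n - 3, n - 2} \<inter> ?S = {}" by auto
  have "RM ({n - 3, n - 2} \<union> ?S) (TE n) (rL n)" by (rule RM_union[OF d R1 R2 cross])
  thus "RM ({..<n} - {n - 1}) (TE n) (rL n)" unfolding un .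
  have evS: "\<And>u. u \<in> ?S \<Longrightarrow> even (rL n u)" using eq by simp
  have oddv: "odd (rL n (n - 2))" "odd (rL n (n - 3))" using v1 n9 by presburger+
  have ne: "rL n x \<noteq> rL n y" if xy: "x \<in> ?S" "y \<in> {n - 3, n - 2}" for x y
  proof -
    have "even (rL n x)" using evS xy(1) .
    moreover have "odd (rL n y)" using xy(2) oddv by auto
    ultimately show ?thesis by metis
  qed
  have inj1: "inj_on (rL n) {n - 3, n - 2}" using v1 n9 by (auto simp: inj_on_def)
  have "inj_on (rL n) ({n - 3, n - 2} \<union> ?S)"
  proof -
    have "rL n ` ({n - 3, n - 2} - ?S) \<inter> rL n ` (?S - {n - 3, n - 2}) = {}"
    proof (rule equals0I)
      fix z assume z: "z \<in> rL n ` ({n - 3, n - 2} - ?S) \<inter> rL n ` (?S - {n - 3, n - 2})"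
      hence z1: "z \<in> rL n ` ({n - 3, n - 2} - ?S)" and z2: "z \<in> rL n ` (?S - {n - 3, n - 2})" by (rule IntD1, rule IntD2)
      from z1 obtain a where a: "a \<in> {n - 3, n - 2} - ?S" "z = rL n a" by (rule imageE)
      from z2 obtain b where b: "b \<in> ?S - {n - 3, n - 2}" "z = rL n b" by (rule imageE)
      have bS: "b \<in> ?S" using b(1) by (rule DiffD1)
      have a12: "a \<in> {n - 3, n - 2}" using a(1) by (rule DiffD1)
      have "rL n b \<noteq> rL n a" by (rule ne[OF bS a12])
      thus False using a(2) b(2) by simp
    qed
    thus ?thesis unfolding inj_on_Un using inj1 inj2 by simp
  qed
  thus "inj_on (rL n) ({..<n} - {n - 1})" unfolding un .
qed

lemma del_matching:
  assumes nk: "n = 2 * k + 9" and v: "v < n"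
  shows "\<exists>r. RM ({..<n} - {v}) (TE n) r \<and> inj_on r ({..<n} - {v})"
proof -
  consider "v = 0" | "v = 2" | "v = n - 3" | "v = n - 1" | "v \<noteq> 0" "v \<noteq> 2" "v + 3 \<noteq> n" "v + 1 \<noteq> n"
    using nk v by linarith
  thus ?thesis
  proof cases
    case 1 thus ?thesis using case0[OF nk] by blast
  next
    case 2 thus ?thesis using case2[OF nk] by blast
  next
    case 3 thus ?thesis using caseM[OF nk] by blast
  next
    case 4 thus ?thesis using caseL[OF nk] by blast
  next
    case 5 thus ?thesis using gen_case[OF nk v] by blast
  qed
qed

lemma tourn: "S \<subseteq> {..<n} \<Longrightarrow> S \<noteq> {} \<Longrightarrow> tournament S (TE n)"
  unfolding tournament_def using TE_irr TE_tot finite_subset by blast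

lemma minimal:
  assumes nk: "n = 2 * k + 9"
  shows "minimal_non_matching {..<n} (TE n)"
  unfolding minimal_non_matching_def
proof (intro conjI allI impI)
  have "0 \<in> {..<n}" using nk by simp
  hence "{..<n} \<noteq> {}" by blast
  thus "tournament {..<n} (TE n)" using tourn[of "{..<n}" n] by simp
  show "\<not> matching_tournament {..<n} (TE n)" using not_matching[OF nk] .
  fix S assume S: "S \<subseteq> {..<n} \<and> S \<noteq> {} \<and> S \<noteq> {..<n}"
  then obtain v where v: "v < n" "v \<notin> S" by auto
  obtain r where r: "RM ({..<n} - {v}) (TE n) r" "inj_on r ({..<n} - {v})"
    using del_matching[OF nk v(1)] by blast
  have sub: "S \<subseteq> {..<n} - {v}" using S v by auto
  have "\<exists>vs. matching_ordering S (TE n) vs"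
  proof (rule rank_ordering)
    show "finite S" using S finite_subset by blast
    show "inj_on r S" using r(2) sub by (rule inj_on_subset)
    show "RM S (TE n) r" using r(1) sub by (rule RM_mono)
  qed
  thus "matching_tournament S (TE n)" using tourn[of S n] S by (simp add: matching_tournament_def)
qed

lemma iso_card: "tournament_iso A E B F \<Longrightarrow> card A = card B"
  unfolding tournament_iso_def using bij_betw_same_card by blast

theorem theorem5p9:
  shows "\<exists>T :: (nat set \<times> (nat \<Rightarrow> nat \<Rightarrow> bool)) set. infinite T \<and>
    (\<forall>(V, E)\<in>T. minimal_non_matching V E) \<and>
    (\<forall>(V1, E1)\<in>T. \<forall>(V2, E2)\<in>T. (V1, E1) \<noteq> (V2, E2) \<longrightarrow> \<not> tournament_iso V1 E1 V2 E2)"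
proof (intro exI conjI)
  let ?f = "\<lambda>k::nat. ({..<2 * k + 9}, TE (2 * k + 9))"
  have inj: "inj ?f"
  proof (rule injI)
    fix a b assume "?f a = ?f b"
    hence "{..<2 * a + 9} = {..<2 * b + 9}" by simp
    hence "card {..<2 * a + 9} = card {..<2 * b + 9}" by simp
    thus "a = b" by simp
  qed
  show "infinite (range ?f)"
  proof
    assume "finite (range ?f)"
    hence "finite (UNIV :: nat set)" using finite_imageD inj by blast
    thus False by simp
  qed
  show "\<forall>(V, E)\<in>range ?f. minimal_non_matching V E"
    using minimal by auto
  show "\<forall>(V1, E1)\<in>range ?f. \<forall>(V2, E2)\<in>range ?f. (V1, E1) \<noteq> (V2, E2) \<longrightarrow> \<not> tournament_iso V1 E1 V2 E2"
    by (auto dest!: iso_card)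
qed

end
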